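(* Let $G=(V,E)$ be a finite simple graph and let $C\subseteq V$. Let $x\in\{0,1\}^{V}$ and $F=\{v\in V\colon x_v=1\}$. Then $F$ is a fort of $G$ with $F\subseteq V\setminus\mathrm{cl}(C)$ if and only if $x$ satisfies: (a) $\sum_{v\in V}x_v\geq1$; (b) $x_u-x_v+\sum_{w\in N(u)\setminus\{v\}}x_w\geq0$ for all $v\in V$ and all $u\in N(v)$; (c) $x_v=0$ for all $v\in C$.
   Context: $N(u)$ denotes the neighborhood of $u$. A fort of $G$ is a non-empty set $F\subseteq V$ such that no vertex $u\in V\setminus F$ has exactly one neighbor in $F$. The closure $\mathrm{cl}(C)$ of $C$ is the set of filled vertices obtained by starting with the vertices of $C$ filled and repeatedly applying the standard color change rule (a filled vertex $u$ forces a non-filled vertex $v$ to become filled if $v$ is the only non-filled neighbor of $u$) until no more forces are possible. *)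

theory Defs
  imports Main
begin

definition simple_graph :: "'a set \<Rightarrow> ('a \<Rightarrow> 'a \<Rightarrow> bool) \<Rightarrow> bool" where
  "simple_graph V E \<longleftrightarrow> finite V \<and> (\<forall>u v. E u v \<longrightarrow> u \<in> V \<and> v \<in> V)
     \<and> (\<forall>u v. E u v \<longrightarrow> E v u) \<and> (\<forall>u. \<not> E u u)"

definition nbhd :: "'a set \<Rightarrow> ('a \<Rightarrow> 'a \<Rightarrow> bool) \<Rightarrow> 'a \<Rightarrow> 'a set" where
  "nbhd V E u = {w \<in> V. E u w}"

definition is_fort :: "'a set \<Rightarrow> ('a \<Rightarrow> 'a \<Rightarrow> bool) \<Rightarrow> 'a set \<Rightarrow> bool" where
  "is_fort V E F \<longleftrightarrow> F \<noteq> {} \<and> F \<subseteq> V \<and>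
     (\<forall>u \<in> V - F. card (nbhd V E u \<inter> F) \<noteq> 1)"

text \<open>Closure under the standard colour change rule: the set obtained from C by
  repeatedly letting a filled vertex u force its unique non-filled neighbour v.\<close>
inductive_set closure_zf :: "'a set \<Rightarrow> ('a \<Rightarrow> 'a \<Rightarrow> bool) \<Rightarrow> 'a set \<Rightarrow> 'a set"
  for V E C where
  base: "c \<in> C \<Longrightarrow> c \<in> closure_zf V E C"
| force: "\<lbrakk> u \<in> closure_zf V E C; v \<in> nbhd V E u;
            \<forall>w \<in> nbhd V E u - {v}. w \<in> closure_zf V E C \<rbrakk> \<Longrightarrow> v \<in> closure_zf V E C"

end

theory Submission
  imports Defs
begin

lemma sum_card01:
  fixes x :: "'a \<Rightarrow> int"
  assumes "finite S" "\<forall>v \<in> S. x v = 0 \<or> x v = 1"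
  shows "(\<Sum>v\<in>S. x v) = int (card {v \<in> S. x v = 1})"
proof -
  have "(\<Sum>v\<in>S. x v) = (\<Sum>v\<in>S. if x v = 1 then 1 else 0)"
    using assms(2) by (intro sum.cong) auto
  also have "\<dots> = int (card {v \<in> S. x v = 1})"
    using assms(1) by (simp add: sum.If_cases Int_def)
  finally show ?thesis .
qed

theorem theorem5p3:
  fixes V :: "'a set" and E :: "'a \<Rightarrow> 'a \<Rightarrow> bool" and C :: "'a set"
    and x :: "'a \<Rightarrow> int"
  assumes "simple_graph V E"
    and "C \<subseteq> V"
    and "\<forall>v \<in> V. x v = 0 \<or> x v = 1"
  shows "(is_fort V E {v \<in> V. x v = 1} \<and> {v \<in> V. x v = 1} \<subseteq> V - closure_zf V E C)
     \<longleftrightarrow> ((\<Sum>v\<in>V. x v) \<ge> 1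
          \<and> (\<forall>v \<in> V. \<forall>u \<in> nbhd V E v. x u - x v + (\<Sum>w \<in> nbhd V E u - {v}. x w) \<ge> 0)
          \<and> (\<forall>v \<in> C. x v = 0))"
proof -
  define F where "F = {v \<in> V. x v = 1}"
  have finV: "finite V" using assms(1) unfolding simple_graph_def by blast
  have EV: "\<And>u v. E u v \<Longrightarrow> u \<in> V \<and> v \<in> V" using assms(1) unfolding simple_graph_def by blast
  have Esym: "\<And>u v. E u v \<Longrightarrow> E v u" using assms(1) unfolding simple_graph_def by blast
  have nbV: "\<And>u. nbhd V E u \<subseteq> V" unfolding nbhd_def by blast
  have sumS: "\<And>S. S \<subseteq> V \<Longrightarrow> (\<Sum>v\<in>S. x v) = int (card (S \<inter> F))"
  proof -
    fix S assume "S \<subseteq> V"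
    hence "finite S" "\<forall>v \<in> S. x v = 0 \<or> x v = 1" using finV assms(3) finite_subset by auto
    from sum_card01[OF this] have "(\<Sum>v\<in>S. x v) = int (card {v \<in> S. x v = 1})" .
    moreover have "{v \<in> S. x v = 1} = S \<inter> F" using \<open>S \<subseteq> V\<close> unfolding F_def by auto
    ultimately show "(\<Sum>v\<in>S. x v) = int (card (S \<inter> F))" by simp
  qed
  have finF: "finite F" unfolding F_def using finV by simp
  have a: "(\<Sum>v\<in>V. x v) \<ge> 1 \<longleftrightarrow> F \<noteq> {}"
  proof -
    have "(\<Sum>v\<in>V. x v) = int (card F)" using sumS[of V] unfolding F_def by (simp add: Int_absorb1 Int_def)
    thus ?thesis using finF by (simp add: card_gt_0_iff Suc_le_eq)
  qed
  have b: "(\<forall>u \<in> V - F. card (nbhd V E u \<inter> F) \<noteq> 1) \<longleftrightarrow>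
     (\<forall>v \<in> V. \<forall>u \<in> nbhd V E v. x u - x v + (\<Sum>w \<in> nbhd V E u - {v}. x w) \<ge> 0)"
  proof
    assume H: "\<forall>u \<in> V - F. card (nbhd V E u \<inter> F) \<noteq> 1"
    show "\<forall>v \<in> V. \<forall>u \<in> nbhd V E v. x u - x v + (\<Sum>w \<in> nbhd V E u - {v}. x w) \<ge> 0"
    proof (intro ballI)
      fix v u assume v: "v \<in> V" and u: "u \<in> nbhd V E v"
      have uV: "u \<in> V" using u unfolding nbhd_def by auto
      have vn: "v \<in> nbhd V E u" using u v Esym unfolding nbhd_def by auto
      have s: "(\<Sum>w \<in> nbhd V E u - {v}. x w) = int (card ((nbhd V E u - {v}) \<inter> F))"
        using sumS nbV by (meson Diff_subset order_trans)
      have fin: "finite (nbhd V E u \<inter> F)" using finF by simp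
      show "x u - x v + (\<Sum>w \<in> nbhd V E u - {v}. x w) \<ge> 0"
      proof (cases "x u = 1 \<or> x v = 0")
        case True
        then show ?thesis using s assms(3) uV v by fastforce
      next
        case False
        hence xu: "x u = 0" and xv: "x v = 1" using assms(3) uV v by auto
        hence "u \<in> V - F" "v \<in> nbhd V E u \<inter> F" using uV v vn unfolding F_def by auto
        hence "card (nbhd V E u \<inter> F) \<noteq> 1" using H by blast
        moreover have "card (nbhd V E u \<inter> F) \<ge> 1" using fin \<open>v \<in> nbhd V E u \<inter> F\<close>
          by (metis One_nat_def Suc_leI card_gt_0_iff empty_iff)
        moreover have "(nbhd V E u - {v}) \<inter> F = (nbhd V E u \<inter> F) - {v}" by blast
        ultimately have "card ((nbhd V E u - {v}) \<inter> F) \<ge> 1"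
          using \<open>v \<in> nbhd V E u \<inter> F\<close> fin by (simp add: card_Diff_singleton)
        then show ?thesis using s xu xv by simp
      qed
    qed
  next
    assume H: "\<forall>v \<in> V. \<forall>u \<in> nbhd V E v. x u - x v + (\<Sum>w \<in> nbhd V E u - {v}. x w) \<ge> 0"
    show "\<forall>u \<in> V - F. card (nbhd V E u \<inter> F) \<noteq> 1"
    proof
      fix u assume u: "u \<in> V - F"
      show "card (nbhd V E u \<inter> F) \<noteq> 1"
      proof
        assume c1: "card (nbhd V E u \<inter> F) = 1"
        then obtain v where ve: "nbhd V E u \<inter> F = {v}" using card_1_singletonE by blast
        hence vV: "v \<in> V" and vF: "v \<in> F" and Euv: "E u v" unfolding nbhd_def by auto
        have un: "u \<in> nbhd V E v" using Esym Euv u unfolding nbhd_def by auto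
        have xu: "x u = 0" using u assms(3) unfolding F_def by auto
        have xv: "x v = 1" using vF unfolding F_def by auto
        have s: "(\<Sum>w \<in> nbhd V E u - {v}. x w) = int (card ((nbhd V E u - {v}) \<inter> F))"
          using sumS nbV by (meson Diff_subset order_trans)
        have "(nbhd V E u - {v}) \<inter> F = {}" using ve by blast
        hence "(\<Sum>w \<in> nbhd V E u - {v}. x w) = 0" using s by simp
        with H vV un xu xv show False by fastforce
      qed
    qed
  qed
  have c: "F \<subseteq> V - closure_zf V E C \<longleftrightarrow> (\<forall>v \<in> C. x v = 0)"
    if fc: "\<forall>u \<in> V - F. card (nbhd V E u \<inter> F) \<noteq> 1"
  proof
    assume "F \<subseteq> V - closure_zf V E C"
    thus "\<forall>v \<in> C. x v = 0" using assms(2,3) closure_zf.base unfolding F_def by fastforce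
  next
    assume C0: "\<forall>v \<in> C. x v = 0"
    have "w \<notin> F" if "w \<in> closure_zf V E C" for w
      using that
    proof (induction rule: closure_zf.induct)
      case (base c)
      then show ?case using C0 unfolding F_def by auto
    next
      case (force u v)
      show ?case
      proof
        assume vF: "v \<in> F"
        have uV: "u \<in> V" using force.hyps(2) EV unfolding nbhd_def by auto
        have "nbhd V E u \<inter> F = {v}" using force vF by blast
        hence "card (nbhd V E u \<inter> F) = 1" by simp
        thus False using fc uV force.IH by blast
      qed
    qed
    thus "F \<subseteq> V - closure_zf V E C" unfolding F_def by blast
  qed
  show ?thesis unfolding F_def[symmetric] is_fort_def
    using a b c unfolding F_def by blast
qed

end
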